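(* For $n\ge2$ and all $P,Q\in\Gamma_n$, $D_{Jh}(P\|Q)\le \frac1{12}D_{\Psi\Delta}(P\|Q)$.
   Context: $\Gamma_n=\{P=(p_1,\dots,p_n): p_i>0,\ \sum p_i=1\}$. $h(P\|Q)=\frac12\sum_{i=1}^n(\sqrt{p_i}-\sqrt{q_i})^2$; $J(P\|Q)=\sum_{i=1}^n(p_i-q_i)\ln\frac{p_i}{q_i}$; $\Delta(P\|Q)=\sum_{i=1}^n\frac{(p_i-q_i)^2}{p_i+q_i}$; $\Psi(P\|Q)=\sum_{i=1}^n\frac{(p_i-q_i)^2(p_i+q_i)}{p_iq_i}$. $D_{Jh}=\frac18J-h$, $D_{\Psi\Delta}=\frac1{16}\Psi-\frac14\Delta$. *)

theory Defs
  imports Complex_Main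
begin

definition Gamma :: "nat \<Rightarrow> (nat \<Rightarrow> real) set" where
  "Gamma n = {p. (\<forall>i<n. p i > 0) \<and> (\<Sum>i<n. p i) = 1}"

definition hellinger :: "nat \<Rightarrow> (nat \<Rightarrow> real) \<Rightarrow> (nat \<Rightarrow> real) \<Rightarrow> real" where
  "hellinger n p q = (1/2) * (\<Sum>i<n. (sqrt (p i) - sqrt (q i))^2)"

definition Jdiv :: "nat \<Rightarrow> (nat \<Rightarrow> real) \<Rightarrow> (nat \<Rightarrow> real) \<Rightarrow> real" where
  "Jdiv n p q = (\<Sum>i<n. (p i - q i) * ln (p i / q i))"

definition Delta :: "nat \<Rightarrow> (nat \<Rightarrow> real) \<Rightarrow> (nat \<Rightarrow> real) \<Rightarrow> real" where
  "Delta n p q = (\<Sum>i<n. (p i - q i)^2 / (p i + q i))"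

definition Psi :: "nat \<Rightarrow> (nat \<Rightarrow> real) \<Rightarrow> (nat \<Rightarrow> real) \<Rightarrow> real" where
  "Psi n p q = (\<Sum>i<n. (p i - q i)^2 * (p i + q i) / (p i * q i))"

definition D_Jh :: "nat \<Rightarrow> (nat \<Rightarrow> real) \<Rightarrow> (nat \<Rightarrow> real) \<Rightarrow> real" where
  "D_Jh n p q = (1/8) * Jdiv n p q - hellinger n p q"

definition D_PsiDelta :: "nat \<Rightarrow> (nat \<Rightarrow> real) \<Rightarrow> (nat \<Rightarrow> real) \<Rightarrow> real" where
  "D_PsiDelta n p q = (1/16) * Psi n p q - (1/4) * Delta n p q"

end

theory Submission
  imports Defs
begin

lemma polyQ: fixes t::real assumes "t>0" shows "(t^2+1)^3 + 6*t*(t^2+1)^2 - 6*t^2*(t^2+1) - 4*t^3 > 0"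
proof -
  have a0: "t^2+1-2*t = (t-1)^2" by (simp add: power2_diff)
  have a: "t^2+1 \<ge> 2*t" using a0 zero_le_power2[of "t-1"] by linarith
  have "6*t*(t^2+1)^2 \<ge> 6*t*(t^2+1)*(2*t)" using a assms by (simp add: power2_eq_square mult_left_mono)
  moreover have "6*t^2*(t^2+1) \<ge> 6*t^2*(2*t)" using a assms by (simp add: mult_left_mono)
  moreover have "(t^2+1)^3 > 0" using zero_le_power2[of t] by (intro zero_less_power) linarith
  moreover have "6*t*(t^2+1)*(2*t) = 2*(6*t^2*(t^2+1))" by (simp add: algebra_simps power2_eq_square)
  moreover have "6*t^2*(2*t) = 12*t^3" by (simp add: algebra_simps power2_eq_square power3_eq_cube)
  moreover have "t^3 > 0" using assms by simp
  ultimately show ?thesis by linarith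
qed
lemma polyP: fixes t::real assumes "t>0" shows "(t+1)^4*(t^4+4*t^2+1) - 24*t^2*(t^2+1)^2 \<ge> 0"
proof -
  have "(t+1)^4*(t^4+4*t^2+1) - 24*t^2*(t^2+1)^2 = (t-1)^2*((t^2+1)^3 + 6*t*(t^2+1)^2 - 6*t^2*(t^2+1) - 4*t^3)"
    by (simp add: algebra_simps power2_eq_square power3_eq_cube power4_eq_xxxx)
  thus ?thesis using polyQ[OF assms] by simp
qed
lemma dV: fixes t::real assumes "t>0" shows
 "((\<lambda>x. (x^2-1)^3/(48*x^2*(x^2+1))) has_real_derivative
   (3*(t^2-1)^2*(2*t) * (48*t^2*(t^2+1)) - (t^2-1)^3 * (48*(2*t)*(t^2+1) + 48*t^2*(2*t))) / ((48*t^2*(t^2+1))*(48*t^2*(t^2+1)))) (at t)"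
proof -
  have p: "t^2+1 > 0" using zero_le_power2[of t] by linarith
  have "48*t^2*(t^2+1) \<noteq> 0" "t^2+1 \<noteq> 0" using assms p by auto
  thus ?thesis using assms
    by (auto intro!: derivative_eq_intros)
qed
lemma fle: fixes a b c d :: real assumes "b>0" "d>0" "a*d \<le> c*b" shows "a/b \<le> c/d"
proof -
  have "a/b = (a*d)/(b*d)" using assms by simp
  also have "\<dots> \<le> (c*b)/(b*d)" by (rule divide_right_mono) (use assms in auto)
  also have "\<dots> = c/d" using assms by simp
  finally show ?thesis .
qed

lemma dVeq: fixes t::real assumes "t>0" shows
  "(3*(t^2-1)^2*(2*t) * (48*t^2*(t^2+1)) - (t^2-1)^3 * (48*(2*t)*(t^2+1) + 48*t^2*(2*t))) / ((48*t^2*(t^2+1))*(48*t^2*(t^2+1)))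
   = (t^2-1)^2*(t^4+4*t^2+1)/(24*t^3*(t^2+1)^2)"
proof -
  have "t^2+1 > 0" using assms by (simp add: add_pos_nonneg)
  hence nz: "(48*t^2*(t^2+1))*(48*t^2*(t^2+1)) \<noteq> 0" "24*t^3*(t^2+1)^2 \<noteq> 0" using assms by auto
  show ?thesis unfolding frac_eq_eq[OF nz] by algebra
qed

lemma dU: fixes t::real assumes "t>0" shows
 "((\<lambda>x. 2*(x-1)/(x+1)) has_real_derivative 4/(t+1)^2) (at t)"
  using assms by (auto intro!: derivative_eq_intros simp: field_simps power2_eq_square)

lemma gap: fixes t::real assumes "t>0" shows "1/t - 4/(t+1)^2 \<le> (t^2-1)^2*(t^4+4*t^2+1)/(24*t^3*(t^2+1)^2)"
proof -
  have e: "1/t - 4/(t+1)^2 = (t-1)^2/(t*(t+1)^2)"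
  proof -
    have "1/t - 4/(t+1)^2 = ((t+1)^2 - 4*t)/(t*(t+1)^2)" using assms by (simp add: diff_frac_eq)
    also have "(t+1)^2 - 4*t = (t-1)^2" by algebra
    finally show ?thesis .
  qed
  have p1: "t^2+1 > 0" using assms by (simp add: add_pos_nonneg)
  have b: "t*(t+1)^2 > 0" "24*t^3*(t^2+1)^2 > 0" using assms p1 by auto
  have "(t^2-1)^2*(t^4+4*t^2+1) * (t*(t+1)^2) - (t-1)^2 * (24*t^3*(t^2+1)^2)
        = (t-1)^2 * t * ((t+1)^4*(t^4+4*t^2+1) - 24*t^2*(t^2+1)^2)" by algebra
  also have "\<dots> \<ge> 0" using polyP[OF assms] assms by simp
  finally have "(t-1)^2 * (24*t^3*(t^2+1)^2) \<le> (t^2-1)^2*(t^4+4*t^2+1) * (t*(t+1)^2)" by simp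
  hence "(t-1)^2/(t*(t+1)^2) \<le> (t^2-1)^2*(t^4+4*t^2+1)/(24*t^3*(t^2+1)^2)"
    using b by (intro fle) auto
  thus ?thesis using e by simp
qed
definition UU :: "real \<Rightarrow> real" where "UU x = 2*(x-1)/(x+1) + (x^2-1)^3/(48*x^2*(x^2+1))"

lemma Gmono: fixes a b :: real assumes "0<a" "a\<le>b" shows "UU a - ln a \<le> UU b - ln b"
proof -
  have "(\<lambda>x. 2*(x-1)/(x+1) + (x^2-1)^3/(48*x^2*(x^2+1)) - ln x) a \<le> (\<lambda>x. 2*(x-1)/(x+1) + (x^2-1)^3/(48*x^2*(x^2+1)) - ln x) b"
  proof (rule DERIV_nonneg_imp_nondecreasing[OF assms(2)])
    fix x assume x: "a \<le> x" "x \<le> b"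
    hence xp: "x > 0" using assms by simp
    have d: "((\<lambda>x. 2*(x-1)/(x+1) + (x^2-1)^3/(48*x^2*(x^2+1)) - ln x) has_real_derivative
       (4/(x+1)^2 + (x^2-1)^2*(x^4+4*x^2+1)/(24*x^3*(x^2+1)^2) - 1/x)) (at x)"
      using DERIV_diff[OF DERIV_add[OF dU[OF xp] dV[OF xp]] DERIV_ln[OF xp]]
      unfolding dVeq[OF xp] inverse_eq_divide .
    have "4/(x+1)^2 + (x^2-1)^2*(x^4+4*x^2+1)/(24*x^3*(x^2+1)^2) - 1/x \<ge> 0"
      using gap[OF xp] by simp
    thus "\<exists>y. ((\<lambda>x. 2*(x-1)/(x+1) + (x^2-1)^3/(48*x^2*(x^2+1)) - ln x) has_real_derivative y) (at x) \<and> y \<ge> 0"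
      using d by blast
  qed
  thus ?thesis by (simp add: UU_def)
qed

lemma lnbound: fixes t :: real assumes "t>0" shows "(t^2-1)*ln t \<le> (t^2-1)*UU t"
proof (cases "t \<ge> 1")
  case True
  have "UU 1 - ln 1 \<le> UU t - ln t" by (rule Gmono) (use True in auto)
  hence "ln t \<le> UU t" by (simp add: UU_def)
  moreover have "t^2 - 1 \<ge> 0" using True by (simp add: one_le_power)
  ultimately show ?thesis by (simp add: mult_left_mono)
next
  case False
  have "UU t - ln t \<le> UU 1 - ln 1" by (rule Gmono) (use False assms in auto)
  hence "UU t \<le> ln t" by (simp add: UU_def)
  moreover have "t^2 - 1 \<le> 0" using False assms by (simp add: power_le_one)
  ultimately show ?thesis by (simp add: mult_left_mono_neg)
qed


lemma ident: fixes t s :: real assumes "t>0" "s>0" shows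
  "(1/4)*s^2*((t^2-1)*UU t) - (1/2)*(t*s-s)^2 = (1/12)*((1/16)*((t*s)^2-s^2)^2*((t*s)^2+s^2)/((t*s)^2*s^2) - (1/4)*((t*s)^2-s^2)^2/((t*s)^2+s^2))"
proof -
  have p: "t^2+1 > 0" using zero_le_power2[of t] by linarith
  have L1: "(t^2-1)*(2*(t-1)/(t+1)) = 2*(t-1)^2"
  proof -
    have "(t^2-1)*(2*(t-1)/(t+1)) = ((t^2-1)*(2*(t-1)))/(t+1)" by simp
    also have "\<dots> = 2*(t-1)^2" using assms by (subst divide_eq_eq) (auto, algebra)
    finally show ?thesis .
  qed
  have L: "(1/4)*s^2*((t^2-1)*UU t) - (1/2)*(t*s-s)^2 = s^2*(t^2-1)^4/(192*t^2*(t^2+1))"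
  proof -
    have "(1/4)*s^2*((t^2-1)*UU t) = (1/4)*s^2*((t^2-1)*(2*(t-1)/(t+1))) + (1/4)*s^2*((t^2-1)*(t^2-1)^3/(48*t^2*(t^2+1)))"
      unfolding UU_def by (simp add: algebra_simps)
    also have "\<dots> = (1/2)*s^2*(t-1)^2 + s^2*(t^2-1)^4/(192*t^2*(t^2+1))"
      unfolding L1 by (simp add: power4_eq_xxxx power3_eq_cube)
    finally show ?thesis by (simp add: power2_eq_square algebra_simps)
  qed
  have nz1: "(t*s)^2*s^2 \<noteq> 0" "16*t^2 \<noteq> 0" "(t*s)^2+s^2 \<noteq> 0" "4*(t^2+1) \<noteq> 0" "192*t^2*(t^2+1) \<noteq> 0"
    using assms p by (simp_all add: add_pos_pos) (use p in linarith)+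
  have R1: "(1/16)*((t*s)^2-s^2)^2*((t*s)^2+s^2)/((t*s)^2*s^2) = s^2*(t^2-1)^2*(t^2+1)/(16*t^2)"
    by (subst frac_eq_eq[OF nz1(1,2)]) algebra
  have R2: "(1/4)*((t*s)^2-s^2)^2/((t*s)^2+s^2) = s^2*(t^2-1)^2/(4*(t^2+1))"
    by (subst frac_eq_eq[OF nz1(3,4)]) algebra
  have R3: "(1/12)*(s^2*(t^2-1)^2*(t^2+1)/(16*t^2) - s^2*(t^2-1)^2/(4*(t^2+1))) = s^2*(t^2-1)^4/(192*t^2*(t^2+1))"
  proof -
    have "s^2*(t^2-1)^2*(t^2+1)/(16*t^2) - s^2*(t^2-1)^2/(4*(t^2+1)) = (s^2*(t^2-1)^2*(t^2+1)*(4*(t^2+1)) - s^2*(t^2-1)^2*(16*t^2))/((16*t^2)*(4*(t^2+1)))"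
      using nz1 by (simp add: diff_frac_eq)
    also have "\<dots> = (12 * (s^2*(t^2-1)^4))/(192*t^2*(t^2+1))"
      by (subst frac_eq_eq) (use nz1 in auto, algebra)
    finally show ?thesis by simp
  qed
  show ?thesis by (simp only: L R1 R2 R3)
qed
lemma termineq: fixes a b :: real assumes "a>0" "b>0" shows
  "(1/8)*((a-b)*ln(a/b)) - (1/2)*(sqrt a - sqrt b)^2 \<le> (1/12)*((1/16)*((a-b)^2*(a+b)/(a*b)) - (1/4)*((a-b)^2/(a+b)))"
proof -
  define s where "s = sqrt b"
  define t where "t = sqrt a / sqrt b"
  have sp: "s > 0" "t > 0" using assms by (auto simp: s_def t_def)
  have ts: "t*s = sqrt a" using assms by (simp add: s_def t_def)
  have ha: "a = (t*s)^2" using ts assms by simp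
  have hb: "b = s^2" using assms by (simp add: s_def)
  have hab: "a/b = t^2" using ha hb sp by (simp add: power_mult_distrib)
  have hl: "ln (a/b) = 2*ln t" using hab sp by (simp add: ln_realpow)
  have "(1/8)*((a-b)*ln(a/b)) = (1/4)*s^2*((t^2-1)*ln t)" unfolding hl ha hb using sp by (simp add: algebra_simps power_mult_distrib ln_realpow)
  also have "\<dots> \<le> (1/4)*s^2*((t^2-1)*UU t)" using lnbound[OF sp(2)] by (simp add: mult_left_mono)
  finally have "(1/8)*((a-b)*ln(a/b)) - (1/2)*(sqrt a - sqrt b)^2 \<le> (1/4)*s^2*((t^2-1)*UU t) - (1/2)*(t*s-s)^2"
    using ts s_def by simp
  also have "\<dots> = (1/12)*((1/16)*((t*s)^2-s^2)^2*((t*s)^2+s^2)/((t*s)^2*s^2) - (1/4)*((t*s)^2-s^2)^2/((t*s)^2+s^2))"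
    by (rule ident[OF sp(2,1)])
  also have "\<dots> = (1/12)*((1/16)*((a-b)^2*(a+b)/(a*b)) - (1/4)*((a-b)^2/(a+b)))"
    unfolding ha[symmetric] hb[symmetric] by simp
  finally show ?thesis .
qed

theorem proposition5p9:
  fixes n :: nat and p q :: "nat \<Rightarrow> real"
  assumes "n \<ge> 2" and "p \<in> Gamma n" and "q \<in> Gamma n"
  shows "D_Jh n p q \<le> (1/12) * D_PsiDelta n p q"
proof -
  have pp: "\<And>i. i<n \<Longrightarrow> p i > 0" and qp: "\<And>i. i<n \<Longrightarrow> q i > 0"
    using assms(2,3) by (auto simp: Gamma_def)
  have "D_Jh n p q = (\<Sum>i<n. (1/8)*((p i - q i)*ln(p i/q i)) - (1/2)*(sqrt (p i) - sqrt (q i))^2)"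
    unfolding D_Jh_def Jdiv_def hellinger_def by (simp add: sum_subtractf sum_distrib_left)
  also have "\<dots> \<le> (\<Sum>i<n. (1/12)*((1/16)*((p i - q i)^2*(p i + q i)/(p i * q i)) - (1/4)*((p i - q i)^2/(p i + q i))))"
    by (rule sum_mono) (use pp qp termineq in auto)
  also have "\<dots> = (1/12) * D_PsiDelta n p q"
    unfolding D_PsiDelta_def Psi_def Delta_def by (simp only: right_diff_distrib sum_subtractf sum_distrib_left)
  finally show ?thesis .
qed

end
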